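(* Let $a<b$, $F:(a,b)\to\mathcal{K}(\mathbb{R}^n)$, $x_0\in(a,b)$, and suppose $F$ is strongly metrically differentiable at $x_0$, i.e. $F$ is metrically differentiable at $x_0$ and there are $L>0$ and a right neighborhood and a left neighborhood of $x_0$ such that $\sup_{y\in F(x_0)}\mathrm{haus}([x_0,x]^MF|_y,D^M_+F(x_0)|_y)\le L|x-x_0|$ for $x$ in the right neighborhood with $x>x_0$, and $\sup_{y\in F(x_0)}\mathrm{haus}([x_0,x]^MF|_y,D^M_-F(x_0)|_y)\le L|x-x_0|$ for $x$ in the left neighborhood with $x<x_0$. Then $\mathrm{haus}(F(x),L^MF(x))=O(|x-x_0|^2)$ as $x\to x_0$.
   Context: $\mathcal{K}(\mathbb{R}^n)$ is the set of nonempty compact subsets of $\mathbb{R}^n$, $|\cdot|$ the Euclidean norm, $\mathrm{dist}(x,A)=\min_{a\in A}|x-a|$, $\mathrm{haus}$ the Hausdorff distance. For $a\in\mathbb{R}^n$, $B\in\mathcal{K}(\mathbb{R}^n)$, $\Pi_B(a)=\{b\in B:|a-b|=\mathrm{dist}(a,B)\}$; for $A,B\in\mathcal{K}(\mathbb{R}^n)$, $\Pi(A,B)=\{(a,b)\in A\times B: a\in\Pi_A(b)\text{ or }b\in\Pi_B(a)\}$. For $x\ne x_0$, $y_0\in F(x_0)$: $[x_0,x]^MF|_{y_0}=\{\frac{y-y_0}{x-x_0}:(y_0,y)\in\Pi(F(x_0),F(x))\}$. $F$ is metrically differentiable from the right at $x_0$ if for every $y\in F(x_0)$ there is a nonempty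 set $D^M_+F(x_0)|_y$ with $\sup_{y\in F(x_0)}\mathrm{haus}(D^M_+F(x_0)|_y,[x_0,x]^MF|_y)\to0$ as $x\to x_0^+$; from the left analogously with $D^M_-F(x_0)|_y$ and $x\to x_0^-$; metrically differentiable means both. The local metric linear approximant is $L^MF(x)=\bigcup_{y\in F(x_0)}\big(\{y\}+(x-x_0)D^M_+F(x_0)|_y\big)$ for $x\ge x_0$ and $L^MF(x)=\bigcup_{y\in F(x_0)}\big(\{y\}+(x-x_0)D^M_-F(x_0)|_y\big)$ for $x<x_0$, where $\{c\}+\lambda A=\{c+\lambda a:a\in A\}$. *)

theory Defs
  imports "HOL-Analysis.Analysis" "HOL-Library.Landau_Symbols"
begin

text \<open>Hausdorff distance between nonempty bounded sets (only used on such sets).\<close>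
definition haus :: "'a::metric_space set \<Rightarrow> 'a set \<Rightarrow> real" where
  "haus A B = max (Sup ((\<lambda>a. infdist a B) ` A)) (Sup ((\<lambda>b. infdist b A) ` B))"

definition metric_proj :: "'a::metric_space set \<Rightarrow> 'a \<Rightarrow> 'a set" where
  "metric_proj B a = {b \<in> B. dist a b = infdist a B}"

definition metric_pairs :: "'a::metric_space set \<Rightarrow> 'a set \<Rightarrow> ('a \<times> 'a) set" where
  "metric_pairs A B = {(p, q). p \<in> A \<and> q \<in> B \<and> (p \<in> metric_proj A q \<or> q \<in> metric_proj B p)}"

definition metric_divdiff ::
  "(real \<Rightarrow> 'a::real_normed_vector set) \<Rightarrow> real \<Rightarrow> real \<Rightarrow> 'a \<Rightarrow> 'a set" where
  "metric_divdiff F x0 x y0 =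
     {(1 / (x - x0)) *\<^sub>R (y - y0) | y. (y0, y) \<in> metric_pairs (F x0) (F x)}"

text \<open>Uniform convergence sup_y haus(...) \<rightarrow> 0 is written out with epsilons; the
  Hausdorff distance being finite forces the (nonempty) derivative sets to be bounded.\<close>
definition metric_diff_right ::
  "(real \<Rightarrow> 'a::real_normed_vector set) \<Rightarrow> real \<Rightarrow> ('a \<Rightarrow> 'a set) \<Rightarrow> bool" where
  "metric_diff_right F x0 Dp \<longleftrightarrow>
     (\<forall>y\<in>F x0. Dp y \<noteq> {} \<and> bounded (Dp y)) \<and>
     (\<forall>\<epsilon>>0. eventually (\<lambda>x. \<forall>y\<in>F x0. haus (Dp y) (metric_divdiff F x0 x y) \<le> \<epsilon>) (at_right x0))"

definition metric_diff_left ::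
  "(real \<Rightarrow> 'a::real_normed_vector set) \<Rightarrow> real \<Rightarrow> ('a \<Rightarrow> 'a set) \<Rightarrow> bool" where
  "metric_diff_left F x0 Dm \<longleftrightarrow>
     (\<forall>y\<in>F x0. Dm y \<noteq> {} \<and> bounded (Dm y)) \<and>
     (\<forall>\<epsilon>>0. eventually (\<lambda>x. \<forall>y\<in>F x0. haus (Dm y) (metric_divdiff F x0 x y) \<le> \<epsilon>) (at_left x0))"

definition metric_lin_approx ::
  "(real \<Rightarrow> 'a::real_normed_vector set) \<Rightarrow> real \<Rightarrow> ('a \<Rightarrow> 'a set) \<Rightarrow> ('a \<Rightarrow> 'a set) \<Rightarrow> real \<Rightarrow> 'a set" where
  "metric_lin_approx F x0 Dp Dm x =
     (if x \<ge> x0 then (\<Union>y\<in>F x0. (\<lambda>d. y + (x - x0) *\<^sub>R d) ` Dp y)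
      else (\<Union>y\<in>F x0. (\<lambda>d. y + (x - x0) *\<^sub>R d) ` Dm y))"

end

theory Submission imports Defs begin

lemma infdist_lower:
  assumes "A \<noteq> {}" "\<And>a. a \<in> A \<Longrightarrow> c \<le> dist x a"
  shows "c \<le> infdist x A"
  using assms by (simp add: infdist_notempty cINF_greatest)

lemma haus_le:
  assumes "A \<noteq> {}" "B \<noteq> {}" "\<forall>a\<in>A. infdist a B \<le> c" "\<forall>b\<in>B. infdist b A \<le> c"
  shows "0 \<le> haus A B \<and> haus A B \<le> c"
proof -
  have b1: "bdd_above ((\<lambda>a. infdist a B) ` A)" using assms(3) by (auto simp: bdd_above_def)
  have b2: "bdd_above ((\<lambda>b. infdist b A) ` B)" using assms(4) by (auto simp: bdd_above_def)
  obtain a0 where a0: "a0 \<in> A" using assms(1) by auto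
  have "0 \<le> Sup ((\<lambda>a. infdist a B) ` A)"
    using cSUP_upper2[OF b1 a0, of 0] infdist_nonneg by auto
  moreover have "Sup ((\<lambda>a. infdist a B) ` A) \<le> c"
    using assms(1,3) by (simp add: cSUP_least)
  moreover have "Sup ((\<lambda>b. infdist b A) ` B) \<le> c"
    using assms(2,4) by (simp add: cSUP_least)
  ultimately show ?thesis unfolding haus_def by auto
qed

lemma bdd_infdist:
  assumes "bounded A"
  shows "bdd_above ((\<lambda>a. infdist a B) ` A)"
proof (cases "B = {}")
  case True then show ?thesis by (auto simp add: infdist_def bdd_above_def)
next
  case False
  then obtain b0 where b0: "b0 \<in> B" by auto
  from assms obtain x e where xe: "\<forall>y\<in>A. dist x y \<le> e" unfolding bounded_def by auto
  have "infdist a B \<le> e + dist x b0" if "a \<in> A" for a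
  proof -
    have "infdist a B \<le> dist a b0" using infdist_le[OF b0] .
    also have "\<dots> \<le> dist a x + dist x b0" by (rule dist_triangle)
    also have "\<dots> \<le> e + dist x b0" using xe that by (simp add: dist_commute)
    finally show ?thesis .
  qed
  then show ?thesis by (auto simp: bdd_above_def)
qed

lemma haus_elem1:
  assumes "bounded A" "haus A B \<le> c" "a \<in> A"
  shows "infdist a B \<le> c"
proof -
  have "infdist a B \<le> Sup ((\<lambda>a. infdist a B) ` A)"
    using cSUP_upper[OF assms(3) bdd_infdist[OF assms(1)]] .
  then show ?thesis using assms(2) unfolding haus_def by linarith
qed

lemma haus_elem2:
  assumes "bounded B" "haus A B \<le> c" "b \<in> B"
  shows "infdist b A \<le> c"
proof -
  have "infdist b A \<le> Sup ((\<lambda>b. infdist b A) ` B)"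
    using cSUP_upper[OF assms(3) bdd_infdist[OF assms(1)]] .
  then show ?thesis using assms(2) unfolding haus_def by linarith
qed

lemma core:
  fixes F0 Fx :: "'a::euclidean_space set" and D :: "'a \<Rightarrow> 'a set" and h c :: real
  assumes h: "h \<noteq> 0" and cF0: "compact F0" "F0 \<noteq> {}" and cFx: "compact Fx" "Fx \<noteq> {}"
    and D: "\<forall>y\<in>F0. D y \<noteq> {} \<and> bounded (D y)"
    and H: "\<forall>y\<in>F0. haus {(1 / h) *\<^sub>R (z - y) | z. (y, z) \<in> metric_pairs F0 Fx} (D y) \<le> c"
  shows "0 \<le> haus Fx (\<Union>y\<in>F0. (\<lambda>d. y + h *\<^sub>R d) ` D y) \<and>
         haus Fx (\<Union>y\<in>F0. (\<lambda>d. y + h *\<^sub>R d) ` D y) \<le> \<bar>h\<bar> * c"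
proof (rule haus_le)
  let ?Lx = "\<Union>y\<in>F0. (\<lambda>d. y + h *\<^sub>R d) ` D y"
  define DD where "DD y = {(1 / h) *\<^sub>R (z - y) | z. (y, z) \<in> metric_pairs F0 Fx}" for y
  have HH: "haus (DD y) (D y) \<le> c" if "y \<in> F0" for y using H that by (simp add: DD_def)
  have scale: "dist (y + h *\<^sub>R v) (y + h *\<^sub>R d) = \<bar>h\<bar> * dist v d" for y v d :: 'a
    by (simp add: dist_norm scaleR_diff_right[symmetric] )
  show "Fx \<noteq> {}" by fact
  show "?Lx \<noteq> {}" using cF0(2) D by auto
  show "\<forall>z\<in>Fx. infdist z ?Lx \<le> \<bar>h\<bar> * c"
  proof
    fix z assume z: "z \<in> Fx"
    obtain y where y: "y \<in> F0" "infdist z F0 = dist z y"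
      using infdist_attains_inf[OF compact_imp_closed[OF cF0(1)] cF0(2)] by metis
    have pair: "(y, z) \<in> metric_pairs F0 Fx"
      using y z unfolding metric_pairs_def metric_proj_def by auto
    define v where "v = (1 / h) *\<^sub>R (z - y)"
    have vD: "v \<in> DD y" using pair by (auto simp: DD_def v_def)
    have zv: "z = y + h *\<^sub>R v" using h by (simp add: v_def)
    have bDD: "bounded (DD y)"
    proof -
      have "DD y \<subseteq> (\<lambda>z. (1 / h) *\<^sub>R (z - y)) ` Fx"
        by (auto simp: DD_def metric_pairs_def)
      moreover have "compact ((\<lambda>z. (1 / h) *\<^sub>R (z - y)) ` Fx)"
        by (rule compact_continuous_image[OF _ cFx(1)]) (intro continuous_intros)
      ultimately show ?thesis using compact_imp_bounded bounded_subset by blast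
    qed
    have iv: "infdist v (D y) \<le> c" using haus_elem1[OF bDD HH[OF y(1)] vD] .
    have "infdist z ?Lx \<le> \<bar>h\<bar> * infdist v (D y)"
    proof -
      have "infdist z ?Lx / \<bar>h\<bar> \<le> infdist v (D y)"
      proof (rule infdist_lower)
        show "D y \<noteq> {}" using D y by auto
        fix d assume d: "d \<in> D y"
        have "infdist z ?Lx \<le> dist z (y + h *\<^sub>R d)"
          by (rule infdist_le) (use d y in auto)
        also have "\<dots> = \<bar>h\<bar> * dist v d" using zv scale by simp
        finally show "infdist z ?Lx / \<bar>h\<bar> \<le> dist v d" using h
          by (simp add: divide_le_eq mult.commute)
      qed
      then show ?thesis using h by (simp add: divide_le_eq mult.commute)
    qed
    also have "\<dots> \<le> \<bar>h\<bar> * c" using iv by (simp add: mult_left_mono)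
    finally show "infdist z ?Lx \<le> \<bar>h\<bar> * c" .
  qed
  show "\<forall>w\<in>?Lx. infdist w Fx \<le> \<bar>h\<bar> * c"
  proof
    fix w assume "w \<in> ?Lx"
    then obtain y d where y: "y \<in> F0" and d: "d \<in> D y" and w: "w = y + h *\<^sub>R d" by auto
    have id: "infdist d (DD y) \<le> c" using haus_elem2[of "D y"] D y HH[OF y] d by blast
    obtain z where z: "z \<in> Fx" "infdist y Fx = dist y z"
      using infdist_attains_inf[OF compact_imp_closed[OF cFx(1)] cFx(2)] by metis
    have pair: "(y, z) \<in> metric_pairs F0 Fx"
      using y z unfolding metric_pairs_def metric_proj_def by auto
    have "DD y \<noteq> {}" using pair by (auto simp: DD_def)
    have "infdist w Fx \<le> \<bar>h\<bar> * infdist d (DD y)"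
    proof -
      have "infdist w Fx / \<bar>h\<bar> \<le> infdist d (DD y)"
      proof (rule infdist_lower)
        show "DD y \<noteq> {}" by fact
        fix v assume "v \<in> DD y"
        then obtain z' where z': "z' \<in> Fx" "v = (1 / h) *\<^sub>R (z' - y)"
          by (auto simp: DD_def metric_pairs_def)
        have zv: "z' = y + h *\<^sub>R v" using h by (simp add: z'(2))
        have "infdist w Fx \<le> dist w z'" by (rule infdist_le) (use z' in auto)
        also have "\<dots> = \<bar>h\<bar> * dist d v" using zv w scale by simp
        finally show "infdist w Fx / \<bar>h\<bar> \<le> dist d v" using h
          by (simp add: divide_le_eq mult.commute)
      qed
      then show ?thesis using h by (simp add: divide_le_eq mult.commute)
    qed
    also have "\<dots> \<le> \<bar>h\<bar> * c" using id by (simp add: mult_left_mono)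
    finally show "infdist w Fx \<le> \<bar>h\<bar> * c" .
  qed
qed

theorem mainTheorem4:
  fixes F :: "real \<Rightarrow> (real ^ 'n) set"
    and a b x0 :: real
    and Dp Dm :: "real ^ 'n \<Rightarrow> (real ^ 'n) set"
  assumes "a < b"
    and "\<forall>x\<in>{a<..<b}. compact (F x) \<and> F x \<noteq> {}"
    and "x0 \<in> {a<..<b}"
    and "metric_diff_right F x0 Dp"
    and "metric_diff_left F x0 Dm"
    and "\<exists>L>0. \<exists>\<delta>>0.
           (\<forall>x. x0 < x \<and> x < x0 + \<delta> \<longrightarrow>
              (\<forall>y\<in>F x0. haus (metric_divdiff F x0 x y) (Dp y) \<le> L * \<bar>x - x0\<bar>)) \<and>
           (\<forall>x. x0 - \<delta> < x \<and> x < x0 \<longrightarrow>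
              (\<forall>y\<in>F x0. haus (metric_divdiff F x0 x y) (Dm y) \<le> L * \<bar>x - x0\<bar>))"
  shows "(\<lambda>x. haus (F x) (metric_lin_approx F x0 Dp Dm x)) \<in> O[at x0](\<lambda>x. \<bar>x - x0\<bar> ^ 2)"
proof -
  obtain L \<delta> where L: "L > 0" "\<delta> > 0"
    and R: "\<forall>x. x0 < x \<and> x < x0 + \<delta> \<longrightarrow>
              (\<forall>y\<in>F x0. haus (metric_divdiff F x0 x y) (Dp y) \<le> L * \<bar>x - x0\<bar>)"
    and Lf: "\<forall>x. x0 - \<delta> < x \<and> x < x0 \<longrightarrow>
              (\<forall>y\<in>F x0. haus (metric_divdiff F x0 x y) (Dm y) \<le> L * \<bar>x - x0\<bar>)"
    using assms(6) by blast
  have F0: "compact (F x0)" "F x0 \<noteq> {}" using assms(2,3) by auto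
  have Dp: "\<forall>y\<in>F x0. Dp y \<noteq> {} \<and> bounded (Dp y)" using assms(4) by (simp add: metric_diff_right_def)
  have Dm: "\<forall>y\<in>F x0. Dm y \<noteq> {} \<and> bounded (Dm y)" using assms(5) by (simp add: metric_diff_left_def)
  define r where "r = min \<delta> (min (x0 - a) (b - x0))"
  have r: "r > 0" using L assms(3) by (auto simp: r_def)
  have P: "\<forall>x. x \<noteq> x0 \<and> dist x x0 < r \<longrightarrow> norm (haus (F x) (metric_lin_approx F x0 Dp Dm x)) \<le> L * norm (\<bar>x - x0\<bar> ^ 2)"
  proof (intro allI impI)
    fix x assume x: "x \<noteq> x0 \<and> dist x x0 < r"
    have xab: "x \<in> {a<..<b}" using x by (auto simp: r_def dist_real_def)
    have Fx: "compact (F x)" "F x \<noteq> {}" using assms(2) xab by auto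
    have h: "x - x0 \<noteq> 0" using x by auto
    have sq: "\<bar>x - x0\<bar> * (L * \<bar>x - x0\<bar>) = L * norm (\<bar>x - x0\<bar> ^ 2)"
      by (simp add: power2_eq_square)
    show "norm (haus (F x) (metric_lin_approx F x0 Dp Dm x)) \<le> L * norm (\<bar>x - x0\<bar> ^ 2)"
    proof (cases "x0 < x")
      case True
      have H: "\<forall>y\<in>F x0. haus {(1 / (x - x0)) *\<^sub>R (z - y) | z. (y, z) \<in> metric_pairs (F x0) (F x)} (Dp y) \<le> L * \<bar>x - x0\<bar>"
        using R True x by (simp add: metric_divdiff_def r_def dist_real_def)
      have eq: "metric_lin_approx F x0 Dp Dm x = (\<Union>y\<in>F x0. (\<lambda>d. y + (x - x0) *\<^sub>R d) ` Dp y)"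
        using True by (simp add: metric_lin_approx_def)
      show ?thesis using core[OF h F0 Fx Dp H] unfolding eq sq[symmetric] by simp
    next
      case False
      then have lt: "x < x0" using h by auto
      have H: "\<forall>y\<in>F x0. haus {(1 / (x - x0)) *\<^sub>R (z - y) | z. (y, z) \<in> metric_pairs (F x0) (F x)} (Dm y) \<le> L * \<bar>x - x0\<bar>"
        using Lf lt x by (simp add: metric_divdiff_def r_def dist_real_def)
      have eq: "metric_lin_approx F x0 Dp Dm x = (\<Union>y\<in>F x0. (\<lambda>d. y + (x - x0) *\<^sub>R d) ` Dm y)"
        using lt by (simp add: metric_lin_approx_def)
      show ?thesis using core[OF h F0 Fx Dm H] unfolding eq sq[symmetric] by simp
    qed
  qed
  have ev: "eventually (\<lambda>x. norm (haus (F x) (metric_lin_approx F x0 Dp Dm x)) \<le> L * norm (\<bar>x - x0\<bar> ^ 2)) (at x0)"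
    unfolding eventually_at using r P by blast
  show ?thesis by (rule bigoI[OF ev])
qed

end
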